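(* Let $G\neq K_n$ be a simple graph with $n$ vertices and maximum degree $\Delta$. (i) If $0\leq \alpha< \frac{1}{\Delta+1}$, then $S_k(A_{\alpha}(G))\leq \frac{(1-\alpha)n}{2}(1+\sqrt{k})$ for every $2\leq k\leq n$. (ii) If $\frac{1}{\Delta+1}\leq \alpha< 1$, then $S_k(A_{\alpha}(G))\leq \frac{\alpha \Delta n}{2}(1+\sqrt{k})$ for every $2\leq k\leq n$.
   Context: All graphs are simple and undirected. For a graph $G$ with adjacency matrix $A(G)$ and diagonal degree matrix $D(G)$, and a real $\alpha\in[0,1]$, $A_{\alpha}(G)=\alpha D(G)+(1-\alpha)A(G)$. For a real symmetric $n\times n$ matrix $M$ with eigenvalues $\lambda_1(M)\geq\cdots\geq\lambda_n(M)$, $S_k(M)=\sum_{i=1}^k\lambda_i(M)$. $K_n$ is the complete graph on $n$ vertices. *)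

theory Defs
  imports "Jordan_Normal_Form.Char_Poly" "HOL-Computational_Algebra.Polynomial"
begin

definition simple_graph :: "nat \<Rightarrow> (nat \<Rightarrow> nat \<Rightarrow> bool) \<Rightarrow> bool" where
  "simple_graph n E \<longleftrightarrow> (\<forall>i j. E i j \<longrightarrow> i < n \<and> j < n) \<and>
     (\<forall>i. \<not> E i i) \<and> (\<forall>i j. E i j \<longrightarrow> E j i)"

definition is_complete_graph :: "nat \<Rightarrow> (nat \<Rightarrow> nat \<Rightarrow> bool) \<Rightarrow> bool" where
  "is_complete_graph n E \<longleftrightarrow> (\<forall>i<n. \<forall>j<n. i \<noteq> j \<longrightarrow> E i j)"

definition degree :: "nat \<Rightarrow> (nat \<Rightarrow> nat \<Rightarrow> bool) \<Rightarrow> nat \<Rightarrow> nat" where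
  "degree n E i = card {j. j < n \<and> E i j}"

definition max_degree :: "nat \<Rightarrow> (nat \<Rightarrow> nat \<Rightarrow> bool) \<Rightarrow> nat" where
  "max_degree n E = Max (insert 0 ((\<lambda>i. degree n E i) ` {0..<n}))"

definition adj_matrix :: "nat \<Rightarrow> (nat \<Rightarrow> nat \<Rightarrow> bool) \<Rightarrow> real mat" where
  "adj_matrix n E = mat n n (\<lambda>(i, j). if E i j then 1 else 0)"

definition deg_matrix :: "nat \<Rightarrow> (nat \<Rightarrow> nat \<Rightarrow> bool) \<Rightarrow> real mat" where
  "deg_matrix n E = mat n n (\<lambda>(i, j). if i = j then real (degree n E i) else 0)"

definition A_alpha :: "real \<Rightarrow> nat \<Rightarrow> (nat \<Rightarrow> nat \<Rightarrow> bool) \<Rightarrow> real mat" where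
  "A_alpha \<alpha> n E = \<alpha> \<cdot>\<^sub>m deg_matrix n E + (1 - \<alpha>) \<cdot>\<^sub>m adj_matrix n E"

text \<open>For a real
  symmetric matrix the characteristic polynomial splits over the reals, so this
  list has length equal to the dimension.\<close>

definition real_roots_mset :: "real poly \<Rightarrow> real multiset" where
  "real_roots_mset p = (\<Sum>x\<in>{x. poly p x = 0}. replicate_mset (order x p) x)"

definition eigenvalues_desc :: "real mat \<Rightarrow> real list" where
  "eigenvalues_desc M = rev (sorted_list_of_multiset (real_roots_mset (char_poly M)))"

definition Sk :: "nat \<Rightarrow> real mat \<Rightarrow> real" where
  "Sk k M = (\<Sum>i<k. eigenvalues_desc M ! i)"

end

theory Submission
  imports Defs "Jordan_Normal_Form.Schur_Decomposition" "HOL-Combinatorics.List_Permutation"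
begin

lemma mv_index: assumes "M \<in> carrier_mat n m" "v \<in> carrier_vec m" "i < n"
  shows "(M *\<^sub>v v) $ i = (\<Sum>j<m. M $$ (i,j) * v $ j)"
  using assms by (auto simp: scalar_prod_def lessThan_atLeast0 intro!: sum.cong)

lemma sym_real_eigenvector:
  fixes A :: "real mat"
  assumes A: "A \<in> carrier_mat n n" and sym: "\<And>i j. i < n \<Longrightarrow> j < n \<Longrightarrow> A $$ (i,j) = A $$ (j,i)"
    and n: "n > 0"
  shows "\<exists>l v. v \<in> carrier_vec n \<and> v \<noteq> 0\<^sub>v n \<and> A *\<^sub>v v = l \<cdot>\<^sub>v v"
proof -
  define Ac where "Ac = map_mat complex_of_real A"
  have Ac: "Ac \<in> carrier_mat n n" using A by (simp add: Ac_def)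
  obtain as where cp: "char_poly Ac = (\<Prod>a\<leftarrow>as. [:- a, 1:])" and las: "length as = n"
    using char_poly_factorized[OF Ac] by blast
  obtain a rest where as: "as = a # rest" using las n by (cases as) auto
  have "poly (char_poly Ac) a = 0" unfolding cp as by simp
  hence ev: "eigenvalue Ac a" using eigenvalue_root_char_poly[OF Ac] by simp
  define z where "z = find_eigenvector Ac a"
  have "eigenvector Ac z a" using find_eigenvector[OF Ac ev] z_def by simp
  hence z: "z \<in> carrier_vec n" and z0: "z \<noteq> 0\<^sub>v n" and eq: "Ac *\<^sub>v z = a \<cdot>\<^sub>v z"
    using Ac unfolding eigenvector_def by auto
  define q where "q = (\<Sum>i<n. \<Sum>j<n. cnj (z$i) * Ac $$ (i,j) * z$j)"
  define s where "s = (\<Sum>i<n. cnj (z$i) * z$i)"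
  have "q = (\<Sum>i<n. cnj (z$i) * (Ac *\<^sub>v z) $ i)"
    unfolding q_def by (auto simp: mv_index[OF Ac z] sum_distrib_left mult.assoc intro!: sum.cong)
  also have "\<dots> = a * s" unfolding eq s_def using z
    by (auto simp: sum_distrib_left intro!: sum.cong)
  finally have qs: "q = a * s" .
  have "cnj q = (\<Sum>i<n. \<Sum>j<n. z$i * Ac $$ (i,j) * cnj (z$j))"
    unfolding q_def using A by (simp add: Ac_def)
  also have "\<dots> = (\<Sum>j<n. \<Sum>i<n. z$i * Ac $$ (i,j) * cnj (z$j))" by (rule sum.swap)
  also have "\<dots> = q" unfolding q_def using A sym
    by (auto simp: Ac_def mult.commute mult.left_commute intro!: sum.cong)
  finally have cq: "cnj q = q" .
  have sr: "s = of_real (\<Sum>i<n. (cmod (z$i))^2)"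
    unfolding s_def of_real_sum by (intro sum.cong) (auto simp: complex_norm_square[symmetric] mult.commute simp del: of_real_power)
  have "\<exists>i<n. z$i \<noteq> 0" using z z0 by (metis eq_vecI carrier_vecD index_zero_vec(1,2))
  then obtain i0 where i0: "i0 < n" "z$i0 \<noteq> 0" by auto
  have "(\<Sum>i<n. (cmod (z$i))^2) > 0"
  proof -
    have "(\<Sum>i<n. (cmod (z$i))^2) \<ge> (cmod (z$i0))^2"
      using i0 by (intro member_le_sum) auto
    moreover have "(cmod (z$i0))^2 > 0" using i0 by simp
    ultimately show ?thesis by linarith
  qed
  hence s0: "s \<noteq> 0" unfolding sr by (metis of_real_eq_0_iff order_less_irrefl)
  have "cnj a = a"
  proof -
    have "cnj a * cnj s = a * s" using qs cq by (metis complex_cnj_mult)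
    moreover have "cnj s = s" using sr by simp
    ultimately show ?thesis using s0 by simp
  qed
  hence "a \<in> \<real>" using Reals_cnj_iff by blast
  then obtain r where ar: "a = of_real r" by (auto elim: Reals_cases)
  have h: "poly (map_poly of_real (char_poly A)) (of_real r) = (of_real (poly (char_poly A) r) :: complex)"
    by (induction "char_poly A") (auto simp: map_poly_pCons)
  have "poly (map_poly of_real (char_poly A)) (complex_of_real r) = 0"
    using \<open>poly (char_poly Ac) a = 0\<close> ar of_real_hom.char_poly_hom[OF A] unfolding Ac_def by metis
  hence "poly (char_poly A) r = 0" using h by simp
  hence "eigenvalue A r" using eigenvalue_root_char_poly[OF A] by simp
  from find_eigenvector[OF A this] show ?thesis using A unfolding eigenvector_def by auto
qed

lemma conjugate_real_vec[simp]: "conjugate (v :: real vec) = v"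
  by (rule eq_vecI) auto

lemma real_sprod_self_ge0: "(v :: real vec) \<bullet> v \<ge> 0"
  unfolding scalar_prod_def by (auto intro!: sum_nonneg)

lemma orthonormal_completion:
  fixes v :: "real vec"
  assumes v: "v \<in> carrier_vec n" and vv: "v \<bullet> v = 1"
  shows "\<exists>ws. length ws = n \<and> set ws \<subseteq> carrier_vec n \<and> ws ! 0 = v \<and>
     (\<forall>i<n. \<forall>j<n. ws!i \<bullet> ws!j = (if i = j then 1 else 0))"
proof -
  have v0: "v \<noteq> 0\<^sub>v n" using vv v by auto
  interpret cof_vec_space n "TYPE(real)" .
  define b where "b = basis_completion v"
  from basis_completion[OF v v0, folded b_def]
  have dist_b: "distinct b" 
    and indep: "\<not> lin_dep (set b)" and b: "set b \<subseteq> carrier_vec n" and hdb: "hd b = v" 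
    and len_b: "length b = n" by auto
  have n: "n \<noteq> 0" using v vv by (cases n) (auto simp: scalar_prod_def)
  from hdb len_b n obtain vs where bv: "b = v # vs" by (cases b, auto)
  define ws0 where "ws0 = gram_schmidt n b"
  from gram_schmidt_result[OF b dist_b indep refl, folded ws0_def]
  have ws0: "set ws0 \<subseteq> carrier_vec n" "corthogonal ws0" "length ws0 = n" 
    by (auto simp: len_b)
  from gram_schmidt_hd[OF v, of vs, folded bv] have hdws: "hd ws0 = v" unfolding ws0_def .
  have ws00: "ws0 ! 0 = v" using hdws n ws0(3) by (cases ws0) auto
  have orth: "\<And>i j. i < n \<Longrightarrow> j < n \<Longrightarrow> ws0!i \<bullet> ws0!j = 0 \<longleftrightarrow> i \<noteq> j"
    using corthogonalD[OF ws0(2)] ws0(3) by auto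
  have pos: "\<And>i. i < n \<Longrightarrow> ws0!i \<bullet> ws0!i > 0"
    using orth real_sprod_self_ge0 by (metis order_le_less)
  define ws where "ws = map (\<lambda>w. (1 / sqrt (w \<bullet> w)) \<cdot>\<^sub>v w) ws0"
  have c: "\<And>i. i < n \<Longrightarrow> ws0 ! i \<in> carrier_vec n" using ws0 by auto
  show ?thesis
  proof (intro exI conjI allI impI)
    show "length ws = n" using ws0 by (simp add: ws_def)
    show "set ws \<subseteq> carrier_vec n" using ws0 by (auto simp: ws_def)
    show "ws ! 0 = v" using n ws0 ws00 vv by (simp add: ws_def)
    fix i j assume i: "i < n" and j: "j < n"
    have "ws!i \<bullet> ws!j = (1 / sqrt (ws0!i \<bullet> ws0!i)) * (1 / sqrt (ws0!j \<bullet> ws0!j)) * (ws0!i \<bullet> ws0!j)"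
      using i j ws0(3) c[OF i] c[OF j] by (simp add: ws_def)
    also have "\<dots> = (if i = j then 1 else 0)"
    proof (cases "i = j")
      case True
      have p: "ws0!i \<bullet> ws0!i > 0" using pos i by auto
      then show ?thesis using True
        by (simp add: field_simps)
    next
      case False then show ?thesis using orth[OF i j] by simp
    qed
    finally show "ws!i \<bullet> ws!j = (if i = j then 1 else 0)" .
  qed
qed

definition orthonormal :: "nat \<Rightarrow> real vec list \<Rightarrow> bool" where
  "orthonormal n ws \<longleftrightarrow> length ws = n \<and> set ws \<subseteq> carrier_vec n \<and>
     (\<forall>i<n. \<forall>j<n. ws!i \<bullet> ws!j = (if i = j then 1 else 0))"

lemma sprod_sum: assumes "x \<in> carrier_vec n" "y \<in> carrier_vec n"
  shows "x \<bullet> y = (\<Sum>r<n. x$r * y$r)"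
  using assms by (auto simp: scalar_prod_def lessThan_atLeast0)

lemma orthonormal_expansion:
  assumes o: "orthonormal n ws" and x: "x \<in> carrier_vec n" and r: "r < n"
  shows "x $ r = (\<Sum>j<n. (ws!j \<bullet> x) * ws!j $ r)"
proof -
  have len: "length ws = n" and c: "\<And>j. j < n \<Longrightarrow> ws!j \<in> carrier_vec n"
    using o unfolding orthonormal_def by auto
  define U where "U = mat_of_cols n ws"
  have U: "U \<in> carrier_mat n n" using len mat_of_cols_carrier(1)[of n ws] by (simp add: U_def)
  have UT: "transpose_mat U \<in> carrier_mat n n" using U by simp
  have "transpose_mat U * U = 1\<^sub>m n"
  proof (rule eq_matI)
    fix i j assume "i < dim_row (1\<^sub>m n)" "j < dim_col (1\<^sub>m n)"
    hence i: "i < n" and j: "j < n" by auto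
    have "(transpose_mat U * U) $$ (i,j) = ws!i \<bullet> ws!j"
      using i j U len c[OF i] c[OF j] by (simp add: U_def col_mat_of_cols)
    then show "(transpose_mat U * U) $$ (i,j) = 1\<^sub>m n $$ (i,j)"
      using o i j unfolding orthonormal_def by auto
  qed (use U in auto)
  hence UU: "U * transpose_mat U = 1\<^sub>m n" using mat_mult_left_right_inverse[OF UT U] by simp
  have "x = (U * transpose_mat U) *\<^sub>v x" using UU x by simp
  also have "\<dots> = U *\<^sub>v (transpose_mat U *\<^sub>v x)" using U x by (simp add: assoc_mult_mat_vec)
  finally have "x $ r = (U *\<^sub>v (transpose_mat U *\<^sub>v x)) $ r" by simp
  also have "\<dots> = (\<Sum>j<n. U $$ (r,j) * (transpose_mat U *\<^sub>v x) $ j)"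
    using U UT x r by (subst mv_index[of _ n n]) auto
  also have "\<dots> = (\<Sum>j<n. (ws!j \<bullet> x) * ws!j $ r)"
    using U r len c by (intro sum.cong) (auto simp: U_def mat_of_cols_index col_mat_of_cols)
  finally show ?thesis .
qed

lemma orthonormal_parseval:
  assumes o: "orthonormal n ws" and x: "x \<in> carrier_vec n"
  shows "(\<Sum>j<n. (ws!j \<bullet> x)^2) = x \<bullet> x"
proof -
  have c: "\<And>j. j < n \<Longrightarrow> ws!j \<in> carrier_vec n"
    using o unfolding orthonormal_def by auto
  have "x \<bullet> x = (\<Sum>r<n. x$r * x$r)" using sprod_sum[OF x x] .
  also have "\<dots> = (\<Sum>r<n. x$r * (\<Sum>j<n. (ws!j \<bullet> x) * ws!j $ r))"
    using orthonormal_expansion[OF o x] by (intro sum.cong) auto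
  also have "\<dots> = (\<Sum>j<n. (ws!j \<bullet> x) * (\<Sum>r<n. ws!j $ r * x$r))"
    by (simp add: sum_distrib_left sum_distrib_right mult_ac) (rule sum.swap)
  also have "\<dots> = (\<Sum>j<n. (ws!j \<bullet> x)^2)"
  proof (intro sum.cong refl)
    fix j assume "j \<in> {..<n}"
    then show "(ws!j \<bullet> x) * (\<Sum>r<n. ws!j $ r * x$r) = (ws!j \<bullet> x)^2"
      using sprod_sum[OF c x, of j] by (simp add: power2_eq_square)
  qed
  finally show ?thesis by simp
qed

lemma sym_sprod:
  fixes A :: "real mat"
  assumes A: "A \<in> carrier_mat n n" and sym: "\<And>i j. i < n \<Longrightarrow> j < n \<Longrightarrow> A $$ (i,j) = A $$ (j,i)"
    and x: "x \<in> carrier_vec n" and y: "y \<in> carrier_vec n"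
  shows "x \<bullet> (A *\<^sub>v y) = y \<bullet> (A *\<^sub>v x)"
proof -
  have "x \<bullet> (A *\<^sub>v y) = (\<Sum>r<n. x$r * (A *\<^sub>v y)$r)"
    using A x y by (intro sprod_sum) auto
  also have "\<dots> = (\<Sum>r<n. x$r * (\<Sum>s<n. A$$(r,s) * y$s))"
    using mv_index[OF A y] by (intro sum.cong) auto
  also have "\<dots> = (\<Sum>s<n. y$s * (\<Sum>r<n. A$$(s,r) * x$r))"
    using sym by (simp add: sum_distrib_left mult_ac) (subst sum.swap, auto intro!: sum.cong)
  also have "\<dots> = (\<Sum>s<n. y$s * (A *\<^sub>v x)$s)"
    using mv_index[OF A x] by (intro sum.cong) auto
  also have "\<dots> = y \<bullet> (A *\<^sub>v x)"
    using A x y by (intro sprod_sum[symmetric]) auto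
  finally show ?thesis .
qed

definition lc :: "nat \<Rightarrow> nat \<Rightarrow> (nat \<Rightarrow> real) \<Rightarrow> (nat \<Rightarrow> real vec) \<Rightarrow> real vec" where
  "lc n K c w = vec n (\<lambda>r. \<Sum>a<K. c a * w a $ r)"

lemma lc_carrier[simp]: "lc n K c w \<in> carrier_vec n" by (simp add: lc_def)

lemma sprod_lc: assumes x: "x \<in> carrier_vec n" and w: "\<And>a. a < K \<Longrightarrow> w a \<in> carrier_vec n"
  shows "x \<bullet> lc n K c w = (\<Sum>a<K. c a * (x \<bullet> w a))"
proof -
  have "x \<bullet> lc n K c w = (\<Sum>r<n. x$r * (\<Sum>a<K. c a * w a $ r))"
    using x by (simp add: sprod_sum lc_def)
  also have "\<dots> = (\<Sum>a<K. c a * (\<Sum>r<n. x$r * w a $ r))"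
    by (simp add: sum_distrib_left mult_ac) (rule sum.swap)
  also have "\<dots> = (\<Sum>a<K. c a * (x \<bullet> w a))"
    using x w by (intro sum.cong) (auto simp: sprod_sum)
  finally show ?thesis .
qed

lemma lc_sprod: assumes x: "x \<in> carrier_vec n" and w: "\<And>a. a < K \<Longrightarrow> w a \<in> carrier_vec n"
  shows "lc n K c w \<bullet> x = (\<Sum>a<K. c a * (w a \<bullet> x))"
  using sprod_lc[OF x w] comm_scalar_prod[OF x lc_carrier] w x
  by (auto intro!: sum.cong comm_scalar_prod)

lemma sum_delta_left: "c < (m::nat) \<Longrightarrow> (\<Sum>b<m. y b * (if c = b then 1 else 0)) = (y c :: real)"
  by (simp add: if_distrib cong: if_cong)

lemma spectral:
  fixes A :: "real mat"
  assumes "A \<in> carrier_mat n n" "\<And>i j. i < n \<Longrightarrow> j < n \<Longrightarrow> A $$ (i,j) = A $$ (j,i)"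
  shows "\<exists>us mu. orthonormal n us \<and> (\<forall>i<n. A *\<^sub>v us!i = mu i \<cdot>\<^sub>v us!i)"
  using assms
proof (induction n arbitrary: A)
  case 0
  show ?case by (rule exI[of _ "[]"]) (auto simp: orthonormal_def)
next
  case (Suc m)
  note A = Suc.prems(1) and sym = Suc.prems(2)
  obtain l v0 where v0: "v0 \<in> carrier_vec (Suc m)" "v0 \<noteq> 0\<^sub>v (Suc m)" "A *\<^sub>v v0 = l \<cdot>\<^sub>v v0"
    using sym_real_eigenvector[OF A sym] by blast
  have "v0 \<bullet> v0 \<noteq> 0" using v0 conjugate_square_eq_0_vec[of v0 "Suc m"] by simp
  hence pos: "v0 \<bullet> v0 > 0" using real_sprod_self_ge0[of v0] by linarith
  define v where "v = (1 / sqrt (v0 \<bullet> v0)) \<cdot>\<^sub>v v0"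
  have vc: "v \<in> carrier_vec (Suc m)" using v0 by (simp add: v_def)
  have vv: "v \<bullet> v = 1" using v0 pos by (simp add: v_def)
  have Av: "A *\<^sub>v v = l \<cdot>\<^sub>v v" using v0 A
    by (simp add: v_def mult_mat_vec[OF A v0(1)] smult_smult_assoc mult.commute)
  obtain ws where o: "orthonormal (Suc m) ws" and ws0: "ws ! 0 = v"
    using orthonormal_completion[OF vc vv] unfolding orthonormal_def by blast
  have wsc: "\<And>j. j < Suc m \<Longrightarrow> ws ! j \<in> carrier_vec (Suc m)" and
    wsd: "\<And>i j. i < Suc m \<Longrightarrow> j < Suc m \<Longrightarrow> ws!i \<bullet> ws!j = (if i = j then 1 else 0)"
    using o unfolding orthonormal_def by auto
  define w where "w a = ws ! Suc a" for a
  have wc: "\<And>a. a < m \<Longrightarrow> w a \<in> carrier_vec (Suc m)" using wsc by (simp add: w_def)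
  have ww: "\<And>a b. a < m \<Longrightarrow> b < m \<Longrightarrow> w a \<bullet> w b = (if a = b then 1 else 0)"
    using wsd by (simp add: w_def)
  have wv: "\<And>a. a < m \<Longrightarrow> w a \<bullet> v = 0" using wsd[of _ 0] ws0 by (simp add: w_def)
  have vw: "\<And>a. a < m \<Longrightarrow> v \<bullet> w a = 0" using wsd[of 0] ws0 by (simp add: w_def)
  define B where "B = mat m m (\<lambda>(a,b). w a \<bullet> (A *\<^sub>v w b))"
  have Bc: "B \<in> carrier_mat m m" by (simp add: B_def)
  have Bsym: "\<And>i j. i < m \<Longrightarrow> j < m \<Longrightarrow> B $$ (i,j) = B $$ (j,i)"
    using sym_sprod[OF A sym wc wc] by (simp add: B_def)
  obtain ys nu where oy: "orthonormal m ys" and ey: "\<forall>i<m. B *\<^sub>v ys!i = nu i \<cdot>\<^sub>v ys!i"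
    using Suc.IH[OF Bc Bsym] by blast
  have ysc: "\<And>j. j < m \<Longrightarrow> ys ! j \<in> carrier_vec m" and
    ysd: "\<And>i j. i < m \<Longrightarrow> j < m \<Longrightarrow> ys!i \<bullet> ys!j = (if i = j then 1 else 0)"
    and ylen: "length ys = m"
    using oy unfolding orthonormal_def by auto
  define f where "f y = lc (Suc m) m (\<lambda>a. y$a) w" for y
  have fc: "f y \<in> carrier_vec (Suc m)" for y by (simp add: f_def)
  have wf: "w a \<bullet> f y' = y' $ a" if "a < m" for a y'
    using sprod_lc[OF wc[OF that] wc, of m] that by (simp add: f_def ww sum_delta_left)
  have ff: "f y \<bullet> f y' = (\<Sum>a<m. y$a * y'$a)" for y y'
  proof -
    have "f y \<bullet> f y' = (\<Sum>a<m. y$a * (w a \<bullet> f y'))"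
      unfolding f_def[of y] by (rule lc_sprod[OF fc]) (rule wc)
    then show ?thesis by (simp add: wf)
  qed
  have vf: "v \<bullet> f y = 0" for y
    using sprod_lc[OF vc wc, of m] by (simp add: f_def vw)
  have fv: "f y \<bullet> v = 0" for y
    using comm_scalar_prod[OF fc vc] vf by simp
  have vAw: "v \<bullet> (A *\<^sub>v w a) = 0" if "a < m" for a
    using sym_sprod[OF A sym vc wc[OF that]] Av that wc[OF that] vc by (simp add: wv)
  have Aw: "(A *\<^sub>v w a) $ r = (\<Sum>b<m. B $$ (b,a) * w b $ r)" if a: "a < m" and r: "r < Suc m" for a r
  proof -
    have "(A *\<^sub>v w a) $ r = (\<Sum>j<Suc m. (ws!j \<bullet> (A *\<^sub>v w a)) * ws!j $ r)"
      using orthonormal_expansion[OF o _ r] A wc[OF a] by simp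
    also have "\<dots> = (\<Sum>b<m. (w b \<bullet> (A *\<^sub>v w a)) * w b $ r)"
      by (subst sum.lessThan_Suc_shift) (use vAw[OF a] in \<open>simp add: ws0 w_def\<close>)
    also have "\<dots> = (\<Sum>b<m. B $$ (b,a) * w b $ r)"
      using a by (intro sum.cong) (auto simp: B_def)
    finally show ?thesis .
  qed
  have Af: "A *\<^sub>v f y = nv \<cdot>\<^sub>v f y" if y: "y \<in> carrier_vec m" and By: "B *\<^sub>v y = nv \<cdot>\<^sub>v y" for y nv
  proof (rule eq_vecI)
    show "dim_vec (A *\<^sub>v f y) = dim_vec (nv \<cdot>\<^sub>v f y)" using A by (simp add: f_def lc_def)
    fix r assume "r < dim_vec (nv \<cdot>\<^sub>v f y)"
    hence r: "r < Suc m" by (simp add: f_def lc_def)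
    have "(A *\<^sub>v f y) $ r = (\<Sum>s<Suc m. A $$ (r,s) * (\<Sum>a<m. y$a * w a $ s))"
      using mv_index[OF A fc r] r by (simp add: f_def lc_def)
    also have "\<dots> = (\<Sum>a<m. y$a * (\<Sum>s<Suc m. A $$ (r,s) * w a $ s))"
      unfolding sum_distrib_left by (subst sum.swap) (simp only: mult_ac)
    also have "\<dots> = (\<Sum>a<m. y$a * (\<Sum>b<m. B $$ (b,a) * w b $ r))"
      using mv_index[OF A wc r] Aw r by (intro sum.cong) auto
    also have "\<dots> = (\<Sum>b<m. (\<Sum>a<m. B $$ (b,a) * y$a) * w b $ r)"
      by (simp add: sum_distrib_left sum_distrib_right mult_ac) (rule sum.swap)
    also have "\<dots> = (\<Sum>b<m. (nv * y$b) * w b $ r)"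
    proof (intro sum.cong refl)
      fix b assume b: "b \<in> {..<m}"
      have "(B *\<^sub>v y) $ b = (\<Sum>a<m. B $$ (b,a) * y$a)" using mv_index[OF Bc y] b by simp
      then show "(\<Sum>a<m. B $$ (b,a) * y$a) * w b $ r = (nv * y$b) * w b $ r"
        using By b y by simp
    qed
    also have "\<dots> = (nv \<cdot>\<^sub>v f y) $ r" using r by (simp add: f_def lc_def sum_distrib_left mult_ac)
    finally show "(A *\<^sub>v f y) $ r = (nv \<cdot>\<^sub>v f y) $ r" .
  qed
  define us where "us = v # map f ys"
  define mu where "mu i = (if i = 0 then l else nu (i - 1))" for i
  show ?case
  proof (intro exI conjI allI impI)
    show "orthonormal (Suc m) us"
      unfolding orthonormal_def
    proof (intro conjI allI impI)
      show "length us = Suc m" using ylen by (simp add: us_def)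
      show "set us \<subseteq> carrier_vec (Suc m)" using vc fc by (auto simp: us_def)
      fix i j assume i: "i < Suc m" and j: "j < Suc m"
      show "us ! i \<bullet> us ! j = (if i = j then 1 else 0)"
      proof (cases i)
        case 0
        then show ?thesis using vv vf j ylen by (cases j) (auto simp: us_def)
      next
        case (Suc i')
        then show ?thesis
        proof (cases j)
          case 0 then show ?thesis using fv Suc i ylen by (auto simp: us_def)
        next
          case (Suc j')
          have "us ! i \<bullet> us ! j = (\<Sum>a<m. ys!i' $ a * ys!j' $ a)"
            using \<open>i = Suc i'\<close> Suc i j ylen by (simp add: us_def ff)
          also have "\<dots> = ys!i' \<bullet> ys!j'"
            using ysc i j Suc \<open>i = Suc i'\<close> by (subst sprod_sum[of _ m]) auto
          finally show ?thesis using ysd[of i' j'] i j Suc \<open>i = Suc i'\<close> by simp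
        qed
      qed
    qed
    fix i assume i: "i < Suc m"
    show "A *\<^sub>v us ! i = mu i \<cdot>\<^sub>v us ! i"
    proof (cases i)
      case 0 then show ?thesis using Av by (simp add: us_def mu_def)
    next
      case (Suc c)
      then show ?thesis using Af[OF ysc ey[rule_format]] i ylen by (simp add: us_def mu_def)
    qed
  qed
qed

lemma orthonormal_UTU:
  assumes o: "orthonormal n ws"
  shows "transpose_mat (mat_of_cols n ws) * mat_of_cols n ws = 1\<^sub>m n"
    "mat_of_cols n ws * transpose_mat (mat_of_cols n ws) = 1\<^sub>m n"
    "mat_of_cols n ws \<in> carrier_mat n n"
proof -
  have len: "length ws = n" and c: "\<And>j. j < n \<Longrightarrow> ws!j \<in> carrier_vec n"
    using o unfolding orthonormal_def by auto
  define U where "U = mat_of_cols n ws"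
  have U: "U \<in> carrier_mat n n" using len mat_of_cols_carrier(1)[of n ws] by (simp add: U_def)
  have UT: "transpose_mat U \<in> carrier_mat n n" using U by simp
  have 1: "transpose_mat U * U = 1\<^sub>m n"
  proof (rule eq_matI)
    fix i j assume "i < dim_row (1\<^sub>m n)" "j < dim_col (1\<^sub>m n)"
    hence i: "i < n" and j: "j < n" by auto
    have "(transpose_mat U * U) $$ (i,j) = ws!i \<bullet> ws!j"
      using i j U len c[OF i] c[OF j] by (simp add: U_def col_mat_of_cols)
    then show "(transpose_mat U * U) $$ (i,j) = 1\<^sub>m n $$ (i,j)"
      using o i j unfolding orthonormal_def by auto
  qed (use U in auto)
  then show "transpose_mat (mat_of_cols n ws) * mat_of_cols n ws = 1\<^sub>m n" by (simp add: U_def)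
  show "mat_of_cols n ws * transpose_mat (mat_of_cols n ws) = 1\<^sub>m n"
    using mat_mult_left_right_inverse[OF UT U 1] by (simp add: U_def)
  show "mat_of_cols n ws \<in> carrier_mat n n" using U by (simp add: U_def)
qed

lemma char_poly_eigenbasis:
  fixes A :: "real mat"
  assumes A: "A \<in> carrier_mat n n" and o: "orthonormal n us"
    and e: "\<forall>i<n. A *\<^sub>v us!i = mu i \<cdot>\<^sub>v us!i"
  shows "char_poly A = (\<Prod>a\<leftarrow>map mu [0..<n]. [:- a, 1:])"
proof -
  have len: "length us = n" and c: "\<And>j. j < n \<Longrightarrow> us!j \<in> carrier_vec n"
    using o unfolding orthonormal_def by auto
  define U where "U = mat_of_cols n us"
  define D where "D = mat n n (\<lambda>(i,j). if i = j then mu i else 0)"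
  have U: "U \<in> carrier_mat n n" and UTU: "transpose_mat U * U = 1\<^sub>m n"
    and UUT: "U * transpose_mat U = 1\<^sub>m n"
    using orthonormal_UTU[OF o] by (auto simp: U_def)
  have D: "D \<in> carrier_mat n n" by (simp add: D_def)
  have UT: "transpose_mat U \<in> carrier_mat n n" using U by simp
  have AU: "A * U = U * D"
  proof (rule eq_matI)
    fix r j assume "r < dim_row (U * D)" "j < dim_col (U * D)"
    hence r: "r < n" and j: "j < n" using U D by auto
    have "(A * U) $$ (r,j) = (A *\<^sub>v us!j) $ r"
      using A U r j len c[OF j] by (simp add: U_def col_mat_of_cols)
    also have "\<dots> = mu j * us!j $ r" using e j r c[OF j] by simp
    also have "\<dots> = (U * D) $$ (r,j)"
    proof -
      have "(U * D) $$ (r,j) = (\<Sum>k<n. U $$ (r,k) * D $$ (k,j))"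
        using U D r j by (simp add: scalar_prod_def lessThan_atLeast0)
      also have "\<dots> = U $$ (r,j) * mu j"
        using j by (simp add: D_def if_distrib cong: if_cong)
      finally show ?thesis using r j len by (simp add: U_def mat_of_cols_index)
    qed
    finally show "(A * U) $$ (r,j) = (U * D) $$ (r,j)" .
  qed (use A U D in auto)
  have "A = A * (U * transpose_mat U)" using A UUT by simp
  also have "\<dots> = (A * U) * transpose_mat U" using A U UT by (simp add: assoc_mult_mat)
  also have "\<dots> = U * D * transpose_mat U" using AU by simp
  finally have "similar_mat_wit A D U (transpose_mat U)"
    unfolding similar_mat_wit_def Let_def using A U D UT UTU UUT by auto
  hence "similar_mat A D" unfolding similar_mat_def by blast
  hence "char_poly A = char_poly D" by (rule char_poly_similar)
  also have "\<dots> = (\<Prod>a\<leftarrow>diag_mat D. [:- a, 1:])"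
    by (rule char_poly_upper_triangular[OF D]) (auto simp: upper_triangular_def D_def)
  also have "diag_mat D = map mu [0..<n]" by (auto simp: diag_mat_def D_def)
  finally show ?thesis .
qed

lemma order_prod_linear:
  "Polynomial.order x (\<Prod>a\<leftarrow>xs. [:- a, 1:]) = count (mset xs) (x::real)"
proof (induction xs)
  case Nil
  then show ?case by (simp add: order_0I)
next
  case (Cons a xs)
  have nz: "(\<Prod>a\<leftarrow>xs. [:- a, 1:]) \<noteq> (0 :: real poly)"
    by (auto simp: prod_list_zero_iff)
  have "Polynomial.order x ([:- a, 1:] * (\<Prod>a\<leftarrow>xs. [:- a, 1:])) = Polynomial.order x [:- a, 1:] + Polynomial.order x (\<Prod>a\<leftarrow>xs. [:- a, 1:])"
    using nz by (intro order_mult) (metis mult_eq_0_iff pCons_eq_0_iff one_neq_zero)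
  moreover have "Polynomial.order x [:- a, 1:] = (if x = a then 1 else 0)"
    using order_power_n_n[of a 1] by (auto intro: order_0I)
  ultimately show ?case using Cons by simp
qed

lemma real_roots_mset_prod:
  "real_roots_mset (\<Prod>a\<leftarrow>xs. [:- a, 1:]) = mset xs"
proof (rule multiset_eqI)
  fix x :: real
  define p where "p = (\<Prod>a\<leftarrow>xs. [:- a, 1:])"
  have nz: "p \<noteq> 0" unfolding p_def by (auto simp: prod_list_zero_iff)
  have fin: "finite {x. poly p x = 0}" using poly_roots_finite[OF nz] .
  have "count (real_roots_mset p) x = (\<Sum>y\<in>{x. poly p x = 0}. if x = y then Polynomial.order y p else 0)"
    unfolding real_roots_mset_def by (simp add: count_sum)
  also have "\<dots> = (if poly p x = 0 then Polynomial.order x p else 0)"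
    using fin by (simp add: sum.delta)
  also have "\<dots> = Polynomial.order x p" using order_root[of p x] nz by auto
  finally show "count (real_roots_mset (\<Prod>a\<leftarrow>xs. [:- a, 1:])) x = count (mset xs) x"
    using order_prod_linear unfolding p_def by simp
qed

lemma Sk_as_subset_sum:
  fixes A :: "real mat"
  assumes cp: "char_poly A = (\<Prod>a\<leftarrow>map mu [0..<n]. [:- a, 1:])" and k: "k \<le> n"
  shows "\<exists>I. I \<subseteq> {..<n} \<and> card I = k \<and> Sk k A = (\<Sum>i\<in>I. mu i)"
proof -
  define xs where "xs = map mu [0..<n]"
  have ev: "eigenvalues_desc A = rev (sort xs)"
    unfolding eigenvalues_desc_def cp xs_def[symmetric] real_roots_mset_prod by simp
  have "mset (rev (sort xs)) = mset xs" by simp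
  from permutation_Ex_bij[OF this] obtain f where
    f: "bij_betw f {..<length (rev (sort xs))} {..<length xs}"
    and fe: "\<forall>i<length (rev (sort xs)). rev (sort xs) ! i = xs ! f i" by blast
  have ln: "length (rev (sort xs)) = n" "length xs = n" by (auto simp: xs_def)
  have inj: "inj_on f {..<k}" using f k ln by (meson bij_betw_imp_inj_on inj_on_subset lessThan_subset_iff)
  have sub: "f ` {..<k} \<subseteq> {..<n}" using f k ln by (auto simp: bij_betw_def)
  have "Sk k A = (\<Sum>i<k. xs ! f i)" unfolding Sk_def ev using fe k ln by (intro sum.cong) auto
  also have "\<dots> = (\<Sum>i<k. mu (f i))"
    using sub by (intro sum.cong) (auto simp: xs_def)
  also have "\<dots> = (\<Sum>i\<in>f ` {..<k}. mu i)" by (simp add: sum.reindex[OF inj])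
  finally show ?thesis using sub card_image[OF inj] by (intro exI[of _ "f ` {..<k}"]) auto
qed

lemma cs_sum:
  fixes a b :: "'i \<Rightarrow> real"
  shows "(\<Sum>i\<in>I. a i * b i)^2 \<le> (\<Sum>i\<in>I. (a i)^2) * (\<Sum>i\<in>I. (b i)^2)"
proof -
  have e1: "(\<Sum>i\<in>I. \<Sum>j\<in>I. (a j)^2 * (b i)^2) = (\<Sum>i\<in>I. \<Sum>j\<in>I. (a i)^2 * (b j)^2)"
    by (rule sum.swap)
  have "0 \<le> (\<Sum>i\<in>I. \<Sum>j\<in>I. (a i * b j - a j * b i)^2)" by (intro sum_nonneg) auto
  also have "\<dots> = (\<Sum>i\<in>I. \<Sum>j\<in>I. (a i)^2 * (b j)^2) + (\<Sum>i\<in>I. \<Sum>j\<in>I. (a j)^2 * (b i)^2)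
      - 2 * (\<Sum>i\<in>I. \<Sum>j\<in>I. (a i * b i) * (a j * b j))"
    by (simp add: power2_eq_square algebra_simps sum_subtractf sum.distrib sum_distrib_left)
  also have "\<dots> = 2 * ((\<Sum>i\<in>I. (a i)^2) * (\<Sum>i\<in>I. (b i)^2)) - 2 * (\<Sum>i\<in>I. a i * b i)^2"
    unfolding e1 by (simp add: power2_eq_square sum_product)
  finally show ?thesis by simp
qed

lemma Sk_bound:
  fixes M :: "real mat"
  assumes M: "M \<in> carrier_mat n n" and sym: "\<And>i j. i < n \<Longrightarrow> j < n \<Longrightarrow> M $$ (i,j) = M $$ (j,i)"
    and c: "c \<ge> 0" and bnd: "\<And>i j. i < n \<Longrightarrow> j < n \<Longrightarrow> \<bar>M $$ (i,j) - c\<bar> \<le> c"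
    and k: "k \<le> n"
  shows "Sk k M \<le> c * n + sqrt k * n * c"
proof -
  obtain us mu where o: "orthonormal n us" and e: "\<forall>i<n. M *\<^sub>v us!i = mu i \<cdot>\<^sub>v us!i"
    using spectral[OF M sym] by blast
  have cp: "char_poly M = (\<Prod>a\<leftarrow>map mu [0..<n]. [:- a, 1:])"
    by (rule char_poly_eigenbasis[OF M o e])
  obtain I where I: "I \<subseteq> {..<n}" and cI: "card I = k" and SkI: "Sk k M = (\<Sum>i\<in>I. mu i)"
    using Sk_as_subset_sum[OF cp k] by blast
  have uc: "\<And>i. i < n \<Longrightarrow> us!i \<in> carrier_vec n" and
    ud: "\<And>i j. i < n \<Longrightarrow> j < n \<Longrightarrow> us!i \<bullet> us!j = (if i = j then 1 else 0)"
    using o unfolding orthonormal_def by auto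
  define N where "N = mat n n (\<lambda>(r,s). M $$ (r,s) - c)"
  have Nc: "N \<in> carrier_mat n n" by (simp add: N_def)
  define one where "one = vec n (\<lambda>_. 1::real)"
  have onec: "one \<in> carrier_vec n" by (simp add: one_def)
  define t where "t i = us!i \<bullet> one" for i
  define g where "g i = N *\<^sub>v us!i" for i
  have gc: "g i \<in> carrier_vec n" for i using Nc by (intro carrier_vecI) (simp add: g_def)
  define q where "q i = us!i \<bullet> g i" for i
  have t_sum: "t i = (\<Sum>r<n. us!i $ r)" if i: "i < n" for i
    using sprod_sum[OF uc[OF i] onec] by (simp add: t_def one_def)
  have mu_eq: "mu i = c * (t i)^2 + q i" if i: "i < n" for i
  proof -
    let ?u = "us!i"
    have "mu i = ?u \<bullet> (M *\<^sub>v ?u)" using e i uc[OF i] ud[OF i i] by simp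
    also have "\<dots> = (\<Sum>r<n. ?u $ r * (M *\<^sub>v ?u) $ r)"
      using sprod_sum[OF uc[OF i]] M uc[OF i] by simp
    also have "\<dots> = (\<Sum>r<n. ?u $ r * (c * t i + g i $ r))"
    proof (intro sum.cong refl)
      fix r assume r: "r \<in> {..<n}"
      have "(M *\<^sub>v ?u) $ r = (\<Sum>s<n. M $$ (r,s) * ?u $ s)" using mv_index[OF M uc[OF i]] r by simp
      also have "\<dots> = (\<Sum>s<n. c * ?u $ s + N $$ (r,s) * ?u $ s)"
        using r by (intro sum.cong) (auto simp: N_def algebra_simps)
      also have "\<dots> = c * t i + g i $ r"
        using r mv_index[OF Nc uc[OF i]] t_sum[OF i] by (simp add: sum.distrib sum_distrib_left g_def)
      finally show "?u $ r * (M *\<^sub>v ?u) $ r = ?u $ r * (c * t i + g i $ r)" by simp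
    qed
    also have "\<dots> = c * t i * (\<Sum>r<n. ?u $ r) + (\<Sum>r<n. ?u $ r * g i $ r)"
      by (simp add: algebra_simps sum.distrib sum_distrib_left)
    also have "\<dots> = c * (t i)^2 + q i"
      using t_sum[OF i] sprod_sum[OF uc[OF i] gc] by (simp add: q_def power2_eq_square)
    finally show ?thesis .
  qed
  have fin: "finite I" using I finite_subset by blast
  have "(\<Sum>i<n. (t i)^2) = one \<bullet> one" using orthonormal_parseval[OF o onec] by (simp add: t_def)
  also have "\<dots> = n" by (simp add: one_def scalar_prod_def)
  finally have tn: "(\<Sum>i<n. (t i)^2) = n" .
  have tI: "(\<Sum>i\<in>I. (t i)^2) \<le> n"
    using sum_mono2[OF finite_lessThan I, of "\<lambda>i. (t i)^2"] tn by simp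
  have qg: "(q i)^2 \<le> g i \<bullet> g i" if i: "i < n" for i
  proof -
    have "(q i)^2 = (\<Sum>r<n. us!i $ r * g i $ r)^2" using sprod_sum[OF uc[OF i] gc] by (simp add: q_def)
    also have "\<dots> \<le> (\<Sum>r<n. (us!i $ r)^2) * (\<Sum>r<n. (g i $ r)^2)" by (rule cs_sum)
    also have "(\<Sum>r<n. (us!i $ r)^2) = 1"
      using sprod_sum[OF uc[OF i] uc[OF i]] ud[OF i i] by (simp add: power2_eq_square)
    also have "(\<Sum>r<n. (g i $ r)^2) = g i \<bullet> g i"
      using sprod_sum[OF gc gc] by (simp add: power2_eq_square)
    finally show ?thesis by simp
  qed
  have gsum: "(\<Sum>i<n. g i \<bullet> g i) \<le> real n * real n * c^2"
  proof -
    have rc: "\<And>r. row N r \<in> carrier_vec n" using Nc by auto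
    have "(\<Sum>i<n. g i \<bullet> g i) = (\<Sum>i<n. \<Sum>r<n. (us!i \<bullet> row N r)^2)"
    proof (intro sum.cong refl)
      fix i assume i: "i \<in> {..<n}"
      have "g i \<bullet> g i = (\<Sum>r<n. g i $ r * g i $ r)" using sprod_sum[OF gc gc] .
      also have "\<dots> = (\<Sum>r<n. (us!i \<bullet> row N r)^2)"
        using i Nc uc comm_scalar_prod[OF rc uc] by (intro sum.cong) (auto simp: g_def power2_eq_square)
      finally show "g i \<bullet> g i = (\<Sum>r<n. (us!i \<bullet> row N r)^2)" .
    qed
    also have "\<dots> = (\<Sum>r<n. \<Sum>i<n. (us!i \<bullet> row N r)^2)" by (rule sum.swap)
    also have "\<dots> = (\<Sum>r<n. row N r \<bullet> row N r)"
      using orthonormal_parseval[OF o rc] by simp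
    also have "\<dots> \<le> (\<Sum>r<n. \<Sum>s<n. c^2)"
    proof (intro sum_mono)
      fix r assume r: "r \<in> {..<n}"
      have "row N r \<bullet> row N r = (\<Sum>s<n. (N $$ (r,s))^2)"
        using sprod_sum[OF rc rc] r Nc by (simp add: power2_eq_square)
      also have "\<dots> \<le> (\<Sum>s<n. c^2)"
      proof (intro sum_mono)
        fix s assume s: "s \<in> {..<n}"
        have "\<bar>N $$ (r,s)\<bar> \<le> c" using bnd r s by (simp add: N_def)
        then show "(N $$ (r,s))^2 \<le> c^2"
          by (metis abs_ge_zero power2_abs power_mono)
      qed
      finally show "row N r \<bullet> row N r \<le> (\<Sum>s<n. c^2)" .
    qed
    also have "\<dots> = real n * real n * c^2" by simp
    finally show ?thesis .
  qed
  have qsq: "(\<Sum>i\<in>I. (q i)^2) \<le> real n * real n * c^2"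
  proof -
    have "(\<Sum>i\<in>I. (q i)^2) \<le> (\<Sum>i\<in>I. g i \<bullet> g i)" using I qg by (intro sum_mono) auto
    also have "\<dots> \<le> (\<Sum>i<n. g i \<bullet> g i)"
      using sum_mono2[OF finite_lessThan I, of "\<lambda>i. g i \<bullet> g i"] real_sprod_self_ge0 by auto
    finally show ?thesis using gsum by simp
  qed
  have "(\<Sum>i\<in>I. q i)^2 = (\<Sum>i\<in>I. 1 * q i)^2" by simp
  also have "\<dots> \<le> (\<Sum>i\<in>I. 1^2) * (\<Sum>i\<in>I. (q i)^2)" by (rule cs_sum)
  also have "\<dots> \<le> real k * (real n * real n * c^2)"
    using cI qsq by (simp add: mult_left_mono)
  finally have qsq2: "(\<Sum>i\<in>I. q i)^2 \<le> real k * (real n * real n * c^2)" .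
  have "(\<Sum>i\<in>I. q i) \<le> sqrt ((\<Sum>i\<in>I. q i)^2)" by simp
  also have "\<dots> \<le> sqrt (real k * (real n * real n * c^2))" using qsq2 by (rule real_sqrt_le_mono)
  also have "\<dots> = sqrt k * n * c" using c by (simp add: real_sqrt_mult)
  finally have qI: "(\<Sum>i\<in>I. q i) \<le> sqrt k * n * c" .
  have "Sk k M = c * (\<Sum>i\<in>I. (t i)^2) + (\<Sum>i\<in>I. q i)"
    unfolding SkI using I mu_eq by (simp add: sum.distrib sum_distrib_left subset_eq)
  also have "\<dots> \<le> c * n + sqrt k * n * c" using tI qI c by (intro add_mono mult_left_mono) auto
  finally show ?thesis .
qed

lemma aux1: "(x::real) = y \<or> x = 1 - a \<or> x = 0 \<Longrightarrow> y \<le> z \<Longrightarrow> 0 \<le> y \<Longrightarrow> z + a < 1 \<Longrightarrow> a < 1 \<Longrightarrow> 0 \<le> x \<and> x \<le> 2 * ((1 - a) / 2)"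
  by auto
lemma aux2: "(x::real) = y \<or> x = 1 - a \<or> x = 0 \<Longrightarrow> y \<le> z \<Longrightarrow> 0 \<le> y \<Longrightarrow> z + a \<ge> 1 \<Longrightarrow> a < 1 \<Longrightarrow> 0 \<le> z \<Longrightarrow> 0 \<le> x \<and> x \<le> 2 * (z / 2)"
  by auto

lemma A_alpha_carrier: "A_alpha a n E \<in> carrier_mat n n"
  by (simp add: A_alpha_def deg_matrix_def adj_matrix_def)

lemma A_alpha_index: "i < n \<Longrightarrow> j < n \<Longrightarrow> A_alpha a n E $$ (i,j) =
   a * (if i = j then real (degree n E i) else 0) + (1 - a) * (if E i j then 1 else 0)"
  by (simp add: A_alpha_def deg_matrix_def adj_matrix_def)

lemma degree_le_max: "i < n \<Longrightarrow> degree n E i \<le> max_degree n E"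
  unfolding max_degree_def by (intro Max_ge) auto

lemma Sk_bound2:
  fixes M :: "real mat"
  assumes M: "M \<in> carrier_mat n n" and sym: "\<And>i j. i < n \<Longrightarrow> j < n \<Longrightarrow> M $$ (i,j) = M $$ (j,i)"
    and bnd: "\<And>i j. i < n \<Longrightarrow> j < n \<Longrightarrow> 0 \<le> M $$ (i,j) \<and> M $$ (i,j) \<le> 2 * c"
    and k: "k \<le> n" and c: "c \<ge> 0"
  shows "Sk k M \<le> c * n * (1 + sqrt k)"
proof -
  have "Sk k M \<le> c * n + sqrt k * n * c"
  proof (rule Sk_bound[OF M sym c _ k])
    fix i j assume "i < n" "j < n"
    then show "\<bar>M $$ (i,j) - c\<bar> \<le> c" using bnd[of i j] by (simp add: abs_le_iff)
  qed
  then show ?thesis by (simp add: algebra_simps)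
qed

theorem theorem3p1:
  fixes n :: nat and E :: "nat \<Rightarrow> nat \<Rightarrow> bool" and \<alpha> :: real
  assumes "simple_graph n E"
    and "\<not> is_complete_graph n E"
  shows "(0 \<le> \<alpha> \<and> \<alpha> < 1 / (real (max_degree n E) + 1) \<longrightarrow>
           (\<forall>k. 2 \<le> k \<and> k \<le> n \<longrightarrow>
              Sk k (A_alpha \<alpha> n E) \<le> (1 - \<alpha>) * real n / 2 * (1 + sqrt (real k))))
       \<and> (1 / (real (max_degree n E) + 1) \<le> \<alpha> \<and> \<alpha> < 1 \<longrightarrow>
           (\<forall>k. 2 \<le> k \<and> k \<le> n \<longrightarrow>
              Sk k (A_alpha \<alpha> n E) \<le> \<alpha> * real (max_degree n E) * real n / 2 * (1 + sqrt (real k))))"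
proof -
  define D where "D = real (max_degree n E)"
  have D0: "D \<ge> 0" by (simp add: D_def)
  have irr: "\<And>i. \<not> E i i" and symE: "\<And>i j. E i j \<Longrightarrow> E j i"
    using assms(1) unfolding simple_graph_def by auto
  let ?M = "A_alpha \<alpha> n E"
  have M: "?M \<in> carrier_mat n n" by (rule A_alpha_carrier)
  have sym: "\<And>i j. i < n \<Longrightarrow> j < n \<Longrightarrow> ?M $$ (i,j) = ?M $$ (j,i)"
    using symE by (auto simp: A_alpha_index)
  have dle: "\<And>i. i < n \<Longrightarrow> real (degree n E i) \<le> D"
    using degree_le_max unfolding D_def by simp
  have entry: "?M $$ (i,j) = \<alpha> * real (degree n E i) \<or> ?M $$ (i,j) = 1 - \<alpha> \<or> ?M $$ (i,j) = 0"
    if "i < n" "j < n" for i j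
    using that irr by (auto simp: A_alpha_index)
  show ?thesis
  proof (intro conjI impI allI)
    fix k assume a: "0 \<le> \<alpha> \<and> \<alpha> < 1 / (real (max_degree n E) + 1)" and k: "2 \<le> k \<and> k \<le> n"
    have aD: "\<alpha> * (D + 1) < 1" using a D0 by (simp add: D_def field_simps)
    have "\<alpha> * D \<ge> 0" using a D0 by simp
    moreover have "\<alpha> * (D + 1) = \<alpha> * D + \<alpha>" by (simp add: algebra_simps)
    ultimately have a1: "\<alpha> < 1" using aD by linarith
    have "Sk k ?M \<le> ((1 - \<alpha>) / 2) * n * (1 + sqrt k)"
    proof (rule Sk_bound2[OF M sym _ _])
      fix i j assume i: "i < n" and j: "j < n"
      have "\<alpha> * real (degree n E i) \<le> \<alpha> * D" using dle[OF i] a by (intro mult_left_mono) auto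
      moreover have "0 \<le> \<alpha> * real (degree n E i)" using a by simp
      moreover have "\<alpha> * D + \<alpha> < 1" using aD by (simp add: algebra_simps)
      ultimately show "0 \<le> ?M $$ (i,j) \<and> ?M $$ (i,j) \<le> 2 * ((1 - \<alpha>) / 2)"
        using entry[OF i j] a1 by (intro aux1)
    qed (use k a1 in auto)
    then show "Sk k ?M \<le> (1 - \<alpha>) * real n / 2 * (1 + sqrt (real k))" by simp
  next
    fix k assume a: "1 / (real (max_degree n E) + 1) \<le> \<alpha> \<and> \<alpha> < 1" and k: "2 \<le> k \<and> k \<le> n"
    have aD: "\<alpha> * (D + 1) \<ge> 1" using a D0 by (simp add: D_def field_simps)
    have "0 < 1 / (D + 1)" using D0 by simp
    then have a0: "\<alpha> > 0" using a unfolding D_def by linarith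
    have "Sk k ?M \<le> (\<alpha> * D / 2) * n * (1 + sqrt k)"
    proof (rule Sk_bound2[OF M sym _ _])
      fix i j assume i: "i < n" and j: "j < n"
      have "\<alpha> * real (degree n E i) \<le> \<alpha> * D" using dle[OF i] a0 by (intro mult_left_mono) auto
      moreover have "0 \<le> \<alpha> * real (degree n E i)" using a0 by simp
      moreover have "\<alpha> * D + \<alpha> \<ge> 1" using aD by (simp add: algebra_simps)
      moreover have "\<alpha> * D \<ge> 0" using a0 D0 by simp
      ultimately show "0 \<le> ?M $$ (i,j) \<and> ?M $$ (i,j) \<le> 2 * (\<alpha> * D / 2)"
        using entry[OF i j] a by (intro aux2) auto
    qed (use k a0 D0 in auto)
    then show "Sk k ?M \<le> \<alpha> * real (max_degree n E) * real n / 2 * (1 + sqrt (real k))"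
      by (simp add: D_def)
  qed
qed

end
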